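(* Let $a<b$, let $N\ge1$ and $T\ge1$. For a probability distribution function $F$ on $[a,b]$ and $y\in[a,b]$ let $\mathrm{CRPS}(F,y)=\int_a^b(F(u)-H(u-y))^2\,du$, where $H(x)=0$ for $x<0$ and $H(x)=1$ for $x\ge0$. Consider the online protocol: set $w_{i,1}=\frac1N$ for $1\le i\le N$; for $t=1,\dots,T$: experts $i=1,\dots,N$ announce probability distribution functions $F_{i,t}$ on $[a,b]$; the learner announces $$F_t(u)=\frac12-\frac14\ln\frac{\sum_{i=1}^N w^*_{i,t}e^{-2(F_{i,t}(u))^2}}{\sum_{i=1}^N w^*_{i,t}e^{-2(1-F_{i,t}(u))^2}},\qquad w^*_{i,t}=\frac{w_{i,t}}{\sum_{j=1}^N w_{j,t}};$$ an outcome $y_t\in[a,b]$ is revealed (arbitrarily, possibly adversarially); and the weights are updated by $w_{i,t+1}=w_{i,t}\,e^{-\frac{2}{b-a}\mathrm{CRPS}(F_{i,t},y_t)}$. Then for every $1\le i\le N$, $$\sum_{t=1}^T\mathrm{CRPS}(F_t,y_t)\le\sum_{t=1}^T\mathrm{CRPS}(F_{i,t},y_t)+\frac{b-a}{2}\ln N.$$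
   Context: A probability distribution function on $[a,b]$ is a non-decreasing function $F:[a,b]\to[0,1]$ with $F(a)=0$, $F(b)=1$, left-continuous and having a right limit at each point. *)

theory Defs
  imports "HOL-Analysis.Analysis"
begin

definition pdf_on :: "real \<Rightarrow> real \<Rightarrow> (real \<Rightarrow> real) \<Rightarrow> bool" where
  "pdf_on a b F \<longleftrightarrow>
     mono_on {a..b} F \<and>
     (\<forall>u\<in>{a..b}. 0 \<le> F u \<and> F u \<le> 1) \<and>
     F a = 0 \<and> F b = 1 \<and>
     (\<forall>x\<in>{a..b}. (F \<longlongrightarrow> F x) (at x within {a..<x})) \<and>
     (\<forall>x\<in>{a..b}. \<exists>L. (F \<longlongrightarrow> L) (at x within {x<..b}))"

definition heaviside :: "real \<Rightarrow> real" where
  "heaviside x = (if x < 0 then 0 else 1)"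

definition CRPS :: "real \<Rightarrow> real \<Rightarrow> (real \<Rightarrow> real) \<Rightarrow> real \<Rightarrow> real" where
  "CRPS a b F y = integral {a..b} (\<lambda>u. (F u - heaviside (u - y))\<^sup>2)"

text \<open>Weights w_{i,t} of the protocol, for t \<ge> 1 (the value at t = 0 is irrelevant).
  F i t is the forecast of expert i at step t, y t the outcome at step t.\<close>
fun weight :: "real \<Rightarrow> real \<Rightarrow> nat \<Rightarrow> (nat \<Rightarrow> nat \<Rightarrow> real \<Rightarrow> real) \<Rightarrow> (nat \<Rightarrow> real)
    \<Rightarrow> nat \<Rightarrow> nat \<Rightarrow> real" where
  "weight a b N F y i 0 = 1 / real N"
| "weight a b N F y i (Suc 0) = 1 / real N"
| "weight a b N F y i (Suc (Suc t)) =
     weight a b N F y i (Suc t) * exp (- (2 / (b - a)) * CRPS a b (F i (Suc t)) (y (Suc t)))"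

definition nweight :: "real \<Rightarrow> real \<Rightarrow> nat \<Rightarrow> (nat \<Rightarrow> nat \<Rightarrow> real \<Rightarrow> real) \<Rightarrow> (nat \<Rightarrow> real)
    \<Rightarrow> nat \<Rightarrow> nat \<Rightarrow> real" where
  "nweight a b N F y i t = weight a b N F y i t / (\<Sum>j=1..N. weight a b N F y j t)"

definition learner :: "real \<Rightarrow> real \<Rightarrow> nat \<Rightarrow> (nat \<Rightarrow> nat \<Rightarrow> real \<Rightarrow> real) \<Rightarrow> (nat \<Rightarrow> real)
    \<Rightarrow> nat \<Rightarrow> real \<Rightarrow> real" where
  "learner a b N F y t u =
     1/2 - 1/4 * ln ((\<Sum>i=1..N. nweight a b N F y i t * exp (-2 * (F i t u)\<^sup>2))
                   / (\<Sum>i=1..N. nweight a b N F y i t * exp (-2 * (1 - F i t u)\<^sup>2)))"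

end

theory Submission
  imports Defs "HOL-Probability.Hoeffding"
begin

lemma hoeff_aux:
  fixes h p :: real
  assumes "0 \<le> h" "0 \<le> p" "p \<le> 1"
  shows "(1-p)*exp(-(h*p)) + p*exp(h - h*p) \<le> exp(h\<^sup>2/8)"
proof -
  have pos: "1 + p*(exp h - 1) > 0"
    using assms by (smt (verit, best) one_le_exp_iff mult_nonneg_nonneg)
  have "-h*p + ln (1 + p*(exp h - 1)) \<le> h\<^sup>2/8"
    using Hoeffdings_lemma_aux[of h p] assms by simp
  hence "ln (1 + p*(exp h - 1)) \<le> h*p + h\<^sup>2/8" by simp
  hence "1 + p*(exp h - 1) \<le> exp (h*p + h\<^sup>2/8)"
    using pos by (metis exp_le_cancel_iff exp_ln)
  hence "exp(-(h*p)) * (1 + p*(exp h - 1)) \<le> exp(-(h*p)) * exp (h*p + h\<^sup>2/8)"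
    by (intro mult_left_mono) auto
  also have "\<dots> = exp(h\<^sup>2/8)" by (simp flip: exp_add)
  also have "exp(-(h*p)) * (1 + p*(exp h - 1)) = (1-p)*exp(-(h*p)) + p*exp(h - h*p)"
    by (simp add: algebra_simps exp_diff exp_minus field_simps)
  finally show ?thesis .
qed

lemma hoeff:
  fixes g x :: real
  assumes "0 \<le> g" "g \<le> 1"
  shows "(1-g)*exp(-g*x) + g*exp((1-g)*x) \<le> exp(x\<^sup>2/8)"
proof (cases "x \<ge> 0")
  case True
  have e: "(1-g)*exp(-g*x) + g*exp((1-g)*x) = (1-g)*exp(-(x*g)) + g*exp(x - x*g)"
    by (simp add: algebra_simps)
  show ?thesis unfolding e using hoeff_aux[of x g] True assms by simp
next
  case False
  have e: "(1-g)*exp(-g*x) + g*exp((1-g)*x) = (1-(1-g))*exp(-((-x)*(1-g))) + (1-g)*exp((-x) - (-x)*(1-g))"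
    by (simp add: algebra_simps)
  show ?thesis unfolding e using hoeff_aux[of "-x" "1-g"] False assms by simp
qed

lemma jensen_exp:
  fixes q d :: "'i \<Rightarrow> real"
  assumes "finite I" "\<And>i. i \<in> I \<Longrightarrow> q i \<ge> 0" "sum q I = 1"
  shows "(\<Sum>i\<in>I. q i * d i) \<le> ln (\<Sum>i\<in>I. q i * exp (d i))"
proof -
  define m where "m = (\<Sum>i\<in>I. q i * d i)"
  have "\<And>i. i \<in> I \<Longrightarrow> q i * (exp m * (1 + (d i - m))) \<le> q i * exp (d i)"
  proof -
    fix i assume i: "i \<in> I"
    have "exp m * (1 + (d i - m)) \<le> exp m * exp (d i - m)"
      by (intro mult_left_mono) (auto simp: exp_ge_add_one_self)
    also have "\<dots> = exp (d i)" by (simp flip: exp_add)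
    finally show "q i * (exp m * (1 + (d i - m))) \<le> q i * exp (d i)"
      using assms(2)[OF i] by (intro mult_left_mono) auto
  qed
  hence "(\<Sum>i\<in>I. q i * (exp m * (1 + (d i - m)))) \<le> (\<Sum>i\<in>I. q i * exp (d i))"
    by (intro sum_mono) auto
  moreover have "(\<Sum>i\<in>I. q i * (exp m * (1 + (d i - m)))) = exp m * (sum q I + (\<Sum>i\<in>I. q i * d i) - m * sum q I)"
    by (simp add: sum_distrib_left sum_distrib_right algebra_simps sum.distrib sum_subtractf)
  ultimately have "exp m \<le> (\<Sum>i\<in>I. q i * exp (d i))" using assms(3) by (simp add: m_def)
  thus ?thesis unfolding m_def[symmetric] by (metis ln_exp ln_le_cancel_iff exp_gt_zero order_less_le_trans)
qed


lemma mix: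
  fixes p g :: "'i \<Rightarrow> real" and \<omega> :: real
  assumes I: "finite I" and p0: "\<And>i. i \<in> I \<Longrightarrow> p i \<ge> 0" and p1: "sum p I = 1"
    and g01: "\<And>i. i \<in> I \<Longrightarrow> 0 \<le> g i \<and> g i \<le> 1" and om: "\<omega> = 0 \<or> \<omega> = 1"
  defines "A \<equiv> (\<Sum>i\<in>I. p i * exp (-2 * (g i)\<^sup>2))"
    and "B \<equiv> (\<Sum>i\<in>I. p i * exp (-2 * (1 - g i)\<^sup>2))"
  shows "(1/2 - 1/4 * ln (A / B) - \<omega>)\<^sup>2 \<le> -(1/2) * ln (\<Sum>i\<in>I. p i * exp (-2 * (g i - \<omega>)\<^sup>2))"
proof -
  define \<gamma> where "\<gamma> = 1/2 - 1/4 * ln (A / B)"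
  have eA: "exp (-2 * (g i)\<^sup>2) = exp (2 - 4 * g i) * exp (-2 * (1 - g i)\<^sup>2)" for i
    by (simp flip: exp_add add: power2_eq_square algebra_simps)
  have Ae: "A = (\<Sum>i\<in>I. p i * exp (-2 * (1 - g i)\<^sup>2) * exp (2 - 4 * g i))"
    unfolding A_def by (intro sum.cong refl) (metis eA mult.assoc mult.commute)
  have B2: "exp (-2) \<le> B"
  proof -
    have "B \<ge> (\<Sum>i\<in>I. p i * exp (-2))" unfolding B_def
    proof (intro sum_mono mult_left_mono)
      fix i assume i: "i \<in> I"
      show "exp (-2) \<le> exp (-2 * (1 - g i)\<^sup>2)" using g01[OF i]
        by (simp add: power_le_one)
    qed (use p0 in auto)
    thus ?thesis by (simp add: sum_distrib_right[symmetric] p1)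
  qed
  hence Bpos: "B > 0" by (smt (verit) exp_gt_zero)
  have "A \<le> (\<Sum>i\<in>I. p i * exp (-2 * (1 - g i)\<^sup>2) * exp 2)" unfolding Ae
    by (intro sum_mono mult_left_mono) (use p0 g01 in auto)
  hence AB1: "A \<le> B * exp 2" by (simp add: B_def sum_distrib_right)
  have "A \<ge> (\<Sum>i\<in>I. p i * exp (-2 * (1 - g i)\<^sup>2) * exp (-2))" unfolding Ae
    by (intro sum_mono mult_left_mono) (use p0 g01 in auto)
  hence AB2: "A \<ge> B * exp (-2)" by (simp add: B_def sum_distrib_right)
  hence Apos: "A > 0" using Bpos by (smt (verit) exp_gt_zero mult_pos_pos)
  have "ln (A/B) \<le> 2"
    using AB1 Bpos Apos by (metis exp_le_cancel_iff exp_ln divide_pos_pos pos_divide_le_eq mult.commute ln_exp ln_le_cancel_iff exp_gt_zero)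
  moreover have "ln (A/B) \<ge> -2"
    using AB2 Bpos Apos by (metis exp_le_cancel_iff exp_ln divide_pos_pos pos_le_divide_eq mult.commute ln_exp ln_le_cancel_iff exp_gt_zero)
  ultimately have g0: "0 \<le> \<gamma>" and g1: "\<gamma> \<le> 1" unfolding \<gamma>_def by auto
  have lnAB: "ln (A/B) = 2 - 4 * \<gamma>" unfolding \<gamma>_def by simp
  have BA: "B = A * exp (4 * \<gamma> - 2)"
  proof -
    have "A / B = exp (2 - 4 * \<gamma>)" using lnAB Apos Bpos by (metis divide_pos_pos exp_ln)
    thus ?thesis using Bpos by (simp add: field_simps flip: exp_add exp_diff)
  qed
  have H: "(1-\<gamma>) * exp (2*\<gamma>\<^sup>2) * exp (-2 * s\<^sup>2) + \<gamma> * exp (2*(1-\<gamma>)\<^sup>2) * exp (-2*(1-s)\<^sup>2) \<le> 1" for s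
  proof -
    define x where "x = 4 * (s - \<gamma>)"
    have "(1-\<gamma>)*exp(-\<gamma>*x) + \<gamma>*exp((1-\<gamma>)*x) \<le> exp(x\<^sup>2/8)" using hoeff g0 g1 by blast
    hence "exp (-(x\<^sup>2/8)) * ((1-\<gamma>)*exp(-\<gamma>*x) + \<gamma>*exp((1-\<gamma>)*x)) \<le> exp (-(x\<^sup>2/8)) * exp(x\<^sup>2/8)"
      by (intro mult_left_mono) auto
    also have "\<dots> = 1" by (simp flip: exp_add)
    also have "exp (-(x\<^sup>2/8)) * ((1-\<gamma>)*exp(-\<gamma>*x) + \<gamma>*exp((1-\<gamma>)*x))
       = (1-\<gamma>) * exp (-(x\<^sup>2/8) - \<gamma>*x) + \<gamma> * exp (-(x\<^sup>2/8) + (1-\<gamma>)*x)"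
    proof -
      have e1: "exp (-(x\<^sup>2/8) - \<gamma>*x) = exp (-(x\<^sup>2/8)) * exp(-\<gamma>*x)"
        by (simp flip: exp_add)
      have e2: "exp (-(x\<^sup>2/8) + (1-\<gamma>)*x) = exp (-(x\<^sup>2/8)) * exp((1-\<gamma>)*x)"
        by (simp flip: exp_add)
      show ?thesis unfolding e1 e2 by (simp add: algebra_simps)
    qed
    also have "-(x\<^sup>2/8) - \<gamma>*x = 2*\<gamma>\<^sup>2 + (-2 * s\<^sup>2)" unfolding x_def by (simp add: power2_eq_square field_simps)
    also have "-(x\<^sup>2/8) + (1-\<gamma>)*x = 2*(1-\<gamma>)\<^sup>2 + (-2*(1-s)\<^sup>2)" unfolding x_def by (simp add: power2_eq_square field_simps)
    finally show ?thesis by (simp add: exp_diff exp_minus mult.assoc divide_inverse)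
  qed
  have "(\<Sum>i\<in>I. p i * ((1-\<gamma>) * exp (2*\<gamma>\<^sup>2) * exp (-2 * (g i)\<^sup>2) + \<gamma> * exp (2*(1-\<gamma>)\<^sup>2) * exp (-2*(1-g i)\<^sup>2)))
      \<le> (\<Sum>i\<in>I. p i * 1)"
    by (intro sum_mono mult_left_mono H) (use p0 in auto)
  then have "(1-\<gamma>) * exp (2*\<gamma>\<^sup>2) * A + \<gamma> * exp (2*(1-\<gamma>)\<^sup>2) * B \<le> 1"
  proof -
    have "(\<Sum>i\<in>I. p i * ((1-\<gamma>) * exp (2*\<gamma>\<^sup>2) * exp (-2 * (g i)\<^sup>2) + \<gamma> * exp (2*(1-\<gamma>)\<^sup>2) * exp (-2*(1-g i)\<^sup>2)))
       = (\<Sum>i\<in>I. ((1-\<gamma>) * exp (2*\<gamma>\<^sup>2)) * (p i * exp (-2 * (g i)\<^sup>2)) + (\<gamma> * exp (2*(1-\<gamma>)\<^sup>2)) * (p i * exp (-2*(1-g i)\<^sup>2)))"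
      by (intro sum.cong refl) (simp only: ring_distribs mult_ac)
    also have "\<dots> = (1-\<gamma>) * exp (2*\<gamma>\<^sup>2) * A + \<gamma> * exp (2*(1-\<gamma>)\<^sup>2) * B"
      unfolding A_def B_def sum.distrib sum_distrib_left[symmetric] ..
    finally show "(\<Sum>i\<in>I. p i * ((1-\<gamma>) * exp (2*\<gamma>\<^sup>2) * exp (-2 * (g i)\<^sup>2) + \<gamma> * exp (2*(1-\<gamma>)\<^sup>2) * exp (-2*(1-g i)\<^sup>2))) \<le> (\<Sum>i\<in>I. p i * 1) \<Longrightarrow> ?thesis"
      using p1 by simp
  qed
  also have "(1-\<gamma>) * exp (2*\<gamma>\<^sup>2) * A + \<gamma> * exp (2*(1-\<gamma>)\<^sup>2) * B = exp (2*\<gamma>\<^sup>2) * A"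
  proof -
    have "exp (2*(1-\<gamma>)\<^sup>2) * exp (4 * \<gamma> - 2) = exp (2*\<gamma>\<^sup>2)"
      by (simp flip: exp_add add: power2_eq_square algebra_simps)
    then show ?thesis unfolding BA by (simp add: algebra_simps)
  qed
  finally have EA: "exp (2*\<gamma>\<^sup>2) * A \<le> 1" .
  have EB: "exp (2*(1-\<gamma>)\<^sup>2) * B \<le> 1"
  proof -
    have "exp (2*(1-\<gamma>)\<^sup>2) * exp (4 * \<gamma> - 2) = exp (2*\<gamma>\<^sup>2)"
      by (simp flip: exp_add add: power2_eq_square algebra_simps)
    then show ?thesis using EA unfolding BA by (metis mult.assoc mult.commute)
  qed
  have key: "ln (exp c * X) \<le> 0 \<Longrightarrow> X > 0 \<Longrightarrow> c \<le> -(1/2) * ln X * 2" for c X :: real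
    by (simp add: ln_mult)
  from om show ?thesis
  proof
    assume "\<omega> = 0"
    have "ln (exp (2*\<gamma>\<^sup>2) * A) \<le> 0" using EA Apos by simp
    hence "2*\<gamma>\<^sup>2 \<le> - ln A" using Apos by (simp add: ln_mult)
    thus ?thesis using \<open>\<omega> = 0\<close> unfolding \<gamma>_def A_def by simp
  next
    assume "\<omega> = 1"
    have "ln (exp (2*(1-\<gamma>)\<^sup>2) * B) \<le> 0" using EB Bpos by simp
    hence "2*(1-\<gamma>)\<^sup>2 \<le> - ln B" using Bpos by (simp add: ln_mult)
    moreover have "(g i - 1)\<^sup>2 = (1 - g i)\<^sup>2" for i by (simp add: power2_commute)
    moreover have "(\<gamma> - 1)\<^sup>2 = (1 - \<gamma>)\<^sup>2" by (simp add: power2_commute)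
    ultimately show ?thesis using \<open>\<omega> = 1\<close> unfolding \<gamma>_def B_def by simp
  qed
qed


lemma gam01:
  fixes p g :: "'i \<Rightarrow> real"
  assumes I: "finite I" and p0: "\<And>i. i \<in> I \<Longrightarrow> p i \<ge> 0" and p1: "sum p I = 1"
    and g01: "\<And>i. i \<in> I \<Longrightarrow> 0 \<le> g i \<and> g i \<le> 1"
  defines "A \<equiv> (\<Sum>i\<in>I. p i * exp (-2 * (g i)\<^sup>2))"
    and "B \<equiv> (\<Sum>i\<in>I. p i * exp (-2 * (1 - g i)\<^sup>2))"
  shows "A > 0" "B > 0" "0 \<le> 1/2 - 1/4 * ln (A / B)" "1/2 - 1/4 * ln (A / B) \<le> 1"
proof -
  have eA: "exp (-2 * (g i)\<^sup>2) = exp (2 - 4 * g i) * exp (-2 * (1 - g i)\<^sup>2)" for i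
    by (simp flip: exp_add add: power2_eq_square algebra_simps)
  have Ae: "A = (\<Sum>i\<in>I. p i * exp (-2 * (1 - g i)\<^sup>2) * exp (2 - 4 * g i))"
    unfolding A_def by (intro sum.cong refl) (metis eA mult.assoc mult.commute)
  have B2: "exp (-2) \<le> B"
  proof -
    have "B \<ge> (\<Sum>i\<in>I. p i * exp (-2))" unfolding B_def
    proof (intro sum_mono mult_left_mono)
      fix i assume i: "i \<in> I"
      show "exp (-2) \<le> exp (-2 * (1 - g i)\<^sup>2)" using g01[OF i]
        by (simp add: power_le_one)
    qed (use p0 in auto)
    thus ?thesis by (simp add: sum_distrib_right[symmetric] p1)
  qed
  thus Bpos: "B > 0" by (smt (verit) exp_gt_zero)
  have "A \<le> (\<Sum>i\<in>I. p i * exp (-2 * (1 - g i)\<^sup>2) * exp 2)" unfolding Ae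
    by (intro sum_mono mult_left_mono) (use p0 g01 in auto)
  hence AB1: "A \<le> B * exp 2" by (simp add: B_def sum_distrib_right)
  have "A \<ge> (\<Sum>i\<in>I. p i * exp (-2 * (1 - g i)\<^sup>2) * exp (-2))" unfolding Ae
    by (intro sum_mono mult_left_mono) (use p0 g01 in auto)
  hence AB2: "A \<ge> B * exp (-2)" by (simp add: B_def sum_distrib_right)
  thus Apos: "A > 0" using Bpos by (smt (verit) exp_gt_zero mult_pos_pos)
  have "ln (A/B) \<le> 2"
    using AB1 Bpos Apos by (metis exp_le_cancel_iff exp_ln divide_pos_pos pos_divide_le_eq mult.commute ln_exp ln_le_cancel_iff exp_gt_zero)
  moreover have "ln (A/B) \<ge> -2"
    using AB2 Bpos Apos by (metis exp_le_cancel_iff exp_ln divide_pos_pos pos_le_divide_eq mult.commute ln_exp ln_le_cancel_iff exp_gt_zero)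
  ultimately show "0 \<le> 1/2 - 1/4 * ln (A / B)" "1/2 - 1/4 * ln (A / B) \<le> 1" by auto
qed

lemma mono_on_mult_nonneg:
  fixes f g :: "real \<Rightarrow> real"
  assumes "mono_on S f" "mono_on S g" "\<And>x. x \<in> S \<Longrightarrow> f x \<ge> 0" "\<And>x. x \<in> S \<Longrightarrow> g x \<ge> 0"
  shows "mono_on S (\<lambda>x. f x * g x)"
  using assms by (intro mono_onI) (auto intro!: mult_mono dest: mono_onD)

lemma mono_on_add':
  fixes f g :: "real \<Rightarrow> real"
  assumes "mono_on S f" "mono_on S g"
  shows "mono_on S (\<lambda>x. f x + g x)"
  using assms by (intro mono_onI) (auto intro!: add_mono dest: mono_onD)

lemma heaviside_mono: "mono_on S (\<lambda>u. heaviside (u - y))"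
  by (intro mono_onI) (auto simp: heaviside_def)

lemma heaviside_01: "heaviside x = 0 \<or> heaviside x = 1"
  by (auto simp: heaviside_def)

lemma sq_int:
  fixes f :: "real \<Rightarrow> real"
  assumes "mono_on {a..b} f" "\<And>u. u \<in> {a..b} \<Longrightarrow> f u \<ge> 0"
  shows "(\<lambda>u. (f u - heaviside (u - y))\<^sup>2) integrable_on {a..b}"
proof -
  let ?h = "\<lambda>u. heaviside (u - y)"
  have h0: "?h u \<ge> 0" for u by (auto simp: heaviside_def)
  have m1: "mono_on {a..b} (\<lambda>u. f u * f u + ?h u)"
    by (intro mono_on_add' mono_on_mult_nonneg heaviside_mono assms) (use assms in auto)
  have m2: "mono_on {a..b} (\<lambda>u. f u * ?h u + f u * ?h u)"
    by (intro mono_on_add' mono_on_mult_nonneg heaviside_mono assms) (use assms h0 in auto)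
  have "(\<lambda>u. (f u * f u + ?h u) - (f u * ?h u + f u * ?h u)) integrable_on {a..b}"
    by (intro integrable_diff integrable_on_mono_on m1 m2)
  moreover have "(f u * f u + ?h u) - (f u * ?h u + f u * ?h u) = (f u - ?h u)\<^sup>2" for u
    using heaviside_01[of "u - y"] by (auto simp: power2_eq_square algebra_simps)
  ultimately show ?thesis by simp
qed

lemma pdf_props:
  assumes "pdf_on a b G"
  shows "mono_on {a..b} G" "\<And>u. u \<in> {a..b} \<Longrightarrow> 0 \<le> G u \<and> G u \<le> 1"
  using assms unfolding pdf_on_def by auto

lemma sum_pos_weights:
  fixes p e :: "'i \<Rightarrow> real"
  assumes "finite I" "\<And>i. i \<in> I \<Longrightarrow> p i \<ge> 0" "sum p I = 1" "\<And>i. i \<in> I \<Longrightarrow> e i > 0"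
  shows "(\<Sum>i\<in>I. p i * e i) > 0"
proof -
  obtain j where j: "j \<in> I" "p j > 0"
  proof (rule ccontr)
    assume "\<not> thesis"
    hence "\<forall>i\<in>I. p i \<le> 0" using that by force
    hence "sum p I \<le> 0" by (simp add: sum_nonpos)
    thus False using assms(3) by simp
  qed
  show ?thesis
  proof (rule sum_pos2[OF assms(1) j(1)])
    show "0 < p j * e j" using j assms(4) by simp
    fix i assume "i \<in> I"
    then show "0 \<le> p i * e i" using assms(2,4)[of i] by simp
  qed
qed


lemma learner_mono:
  fixes p :: "'i \<Rightarrow> real" and G :: "'i \<Rightarrow> real \<Rightarrow> real"
  assumes I: "finite I" and p0: "\<And>i. i \<in> I \<Longrightarrow> p i \<ge> 0" and p1: "sum p I = 1"
    and mono: "\<And>i. i \<in> I \<Longrightarrow> mono_on S (G i)"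
    and g01: "\<And>i u. i \<in> I \<Longrightarrow> u \<in> S \<Longrightarrow> 0 \<le> G i u \<and> G i u \<le> 1"
  shows "mono_on S (\<lambda>u. 1/2 - 1/4 * ln ((\<Sum>i\<in>I. p i * exp (-2 * (G i u)\<^sup>2)) / (\<Sum>i\<in>I. p i * exp (-2 * (1 - G i u)\<^sup>2))))"
proof (rule mono_onI)
  fix u v assume u: "u \<in> S" and v: "v \<in> S" and uv: "u \<le> v"
  define A where "A = (\<lambda>u. (\<Sum>i\<in>I. p i * exp (-2 * (G i u)\<^sup>2)))"
  define B where "B = (\<lambda>u. (\<Sum>i\<in>I. p i * exp (-2 * (1 - G i u)\<^sup>2)))"
  have le: "G i u \<le> G i v" if "i \<in> I" for i using mono[OF that] u v uv by (auto dest: mono_onD)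
  have "A v \<le> A u" unfolding A_def
  proof (intro sum_mono mult_left_mono)
    fix i assume i: "i \<in> I"
    have "(G i u)\<^sup>2 \<le> (G i v)\<^sup>2" using le[OF i] g01[OF i u] by (intro power_mono) auto
    thus "exp (-2 * (G i v)\<^sup>2) \<le> exp (-2 * (G i u)\<^sup>2)" by simp
  qed (use p0 in auto)
  moreover have "B u \<le> B v" unfolding B_def
  proof (intro sum_mono mult_left_mono)
    fix i assume i: "i \<in> I"
    have "(1 - G i v)\<^sup>2 \<le> (1 - G i u)\<^sup>2" using le[OF i] g01[OF i v] by (intro power_mono) auto
    thus "exp (-2 * (1 - G i u)\<^sup>2) \<le> exp (-2 * (1 - G i v)\<^sup>2)" by simp
  qed (use p0 in auto)
  moreover have "A v > 0" "B v > 0"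
    using gam01(1,2)[OF I p0 p1, of "\<lambda>i. G i v"] g01[OF _ v] unfolding A_def B_def by auto
  moreover have "B u > 0"
    using gam01(2)[OF I p0 p1, of "\<lambda>i. G i u"] g01[OF _ u] unfolding A_def B_def by auto
  ultimately have "A v / B v \<le> A u / B u"
    using frac_le[of "A u" "A v" "B u" "B v"] by linarith
  moreover have "A v / B v > 0" using \<open>A v > 0\<close> \<open>B v > 0\<close> by simp
  ultimately have "ln (A v / B v) \<le> ln (A u / B u)" by (rule ln_mono)
  thus "1/2 - 1/4 * ln ((\<Sum>i\<in>I. p i * exp (-2 * (G i u)\<^sup>2)) / (\<Sum>i\<in>I. p i * exp (-2 * (1 - G i u)\<^sup>2)))
     \<le> 1/2 - 1/4 * ln ((\<Sum>i\<in>I. p i * exp (-2 * (G i v)\<^sup>2)) / (\<Sum>i\<in>I. p i * exp (-2 * (1 - G i v)\<^sup>2)))"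
    unfolding A_def B_def by linarith
qed


lemma step:
  fixes p :: "'i \<Rightarrow> real" and G :: "'i \<Rightarrow> real \<Rightarrow> real"
  assumes ab: "a < b" and I: "finite I" and p0: "\<And>i. i \<in> I \<Longrightarrow> p i \<ge> 0" and p1: "sum p I = 1"
    and pdf: "\<And>i. i \<in> I \<Longrightarrow> pdf_on a b (G i)" and y: "y \<in> {a..b}"
  shows "CRPS a b (\<lambda>u. 1/2 - 1/4 * ln ((\<Sum>i\<in>I. p i * exp (-2 * (G i u)\<^sup>2)) / (\<Sum>i\<in>I. p i * exp (-2 * (1 - G i u)\<^sup>2)))) y
     \<le> - ((b - a) / 2) * ln (\<Sum>i\<in>I. p i * exp (- (2 / (b - a)) * CRPS a b (G i) y))"
proof -
  define L where "L = (\<lambda>u. 1/2 - 1/4 * ln ((\<Sum>i\<in>I. p i * exp (-2 * (G i u)\<^sup>2)) / (\<Sum>i\<in>I. p i * exp (-2 * (1 - G i u)\<^sup>2))))"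
  define h where "h = (\<lambda>u. heaviside (u - y))"
  define c where "c = (\<lambda>i. CRPS a b (G i) y)"
  define Z where "Z = (\<Sum>i\<in>I. p i * exp (- (2 / (b - a)) * c i))"
  define q where "q = (\<lambda>i. p i * exp (- (2 / (b - a)) * c i) / Z)"
  have gm: "mono_on {a..b} (G i)" "\<And>u. u \<in> {a..b} \<Longrightarrow> 0 \<le> G i u \<and> G i u \<le> 1" if "i \<in> I" for i
    using pdf_props[OF pdf[OF that]] by auto
  have Zpos: "Z > 0" unfolding Z_def by (rule sum_pos_weights[OF I p0 p1]) auto
  have q0: "q i \<ge> 0" if "i \<in> I" for i using p0[OF that] Zpos by (simp add: q_def)
  have q1: "sum q I = 1" using Zpos by (simp add: q_def Z_def sum_divide_distrib[symmetric])
  have lint: "((\<lambda>u. (G i u - h u)\<^sup>2) has_integral c i) {a..b}" if "i \<in> I" for i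
    using sq_int[OF gm(1)[OF that], of y] gm(2)[OF that] unfolding c_def CRPS_def h_def
    by (simp add: integrable_integral)
  have Lm: "mono_on {a..b} L" unfolding L_def
    by (rule learner_mono[OF I p0 p1]) (use gm in auto)
  have L0: "0 \<le> L u" if "u \<in> {a..b}" for u
    unfolding L_def by (rule gam01(3)[OF I p0 p1]) (use gm that in auto)
  have Lint: "(\<lambda>u. (L u - h u)\<^sup>2) integrable_on {a..b}"
    unfolding h_def by (rule sq_int[OF Lm L0])
  define R where "R = (\<lambda>u. -(1/2) * ln Z + (\<Sum>i\<in>I. q i * ((G i u - h u)\<^sup>2 - c i / (b - a))))"
  have Rint: "(R has_integral (-(1/2) * ln Z * (b - a) + (\<Sum>i\<in>I. q i * (c i - c i / (b - a) * (b - a))))) {a..b}"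
    unfolding R_def
  proof (intro has_integral_add has_integral_sum[OF I] has_integral_mult_right has_integral_diff lint)
    show "((\<lambda>u. - (1 / 2) * ln Z) has_integral - (1 / 2) * ln Z * (b - a)) {a..b}"
      using has_integral_const_real[of "-(1/2) * ln Z" a b] ab by (simp add: mult.commute)
    fix i assume "i \<in> I"
    show "((\<lambda>u. c i / (b - a)) has_integral c i / (b - a) * (b - a)) {a..b}"
      using has_integral_const_real[of "c i / (b - a)" a b] ab by (simp add: mult.commute)
  qed
  have Rval: "-(1/2) * ln Z * (b - a) + (\<Sum>i\<in>I. q i * (c i - c i / (b - a) * (b - a))) = - ((b - a) / 2) * ln Z"
    using ab by simp
  have pw: "(L u - h u)\<^sup>2 \<le> R u" if u: "u \<in> {a..b}" for u
  proof -
    define S where "S = (\<Sum>i\<in>I. p i * exp (-2 * (G i u - h u)\<^sup>2))"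
    have "(L u - h u)\<^sup>2 \<le> -(1/2) * ln S"
      unfolding L_def S_def h_def
      by (rule mix[OF I p0 p1]) (use gm u heaviside_01 in auto)
    moreover have "-(1/2) * ln S \<le> R u"
    proof -
      define d where "d = (\<lambda>i. (2 / (b - a)) * c i - 2 * (G i u - h u)\<^sup>2)"
      have "(\<Sum>i\<in>I. q i * d i) \<le> ln (\<Sum>i\<in>I. q i * exp (d i))"
        by (rule jensen_exp[OF I q0 q1])
      also have "(\<Sum>i\<in>I. q i * exp (d i)) = S / Z"
        unfolding S_def q_def d_def sum_divide_distrib
        by (intro sum.cong refl) (simp add: exp_diff exp_minus field_simps)
      also have "ln (S / Z) = ln S - ln Z"
      proof -
        have "S > 0" unfolding S_def by (rule sum_pos_weights[OF I p0 p1]) auto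
        thus ?thesis using Zpos by (simp add: ln_div)
      qed
      finally have "(\<Sum>i\<in>I. q i * d i) \<le> ln S - ln Z" .
      moreover have "(\<Sum>i\<in>I. q i * d i) = - 2 * (\<Sum>i\<in>I. q i * ((G i u - h u)\<^sup>2 - c i / (b - a)))"
        unfolding d_def sum_distrib_left by (intro sum.cong refl) (simp add: algebra_simps)
      ultimately show ?thesis unfolding R_def by linarith
    qed
    ultimately show ?thesis by linarith
  qed
  have "integral {a..b} (\<lambda>u. (L u - h u)\<^sup>2) \<le> -(1/2) * ln Z * (b - a) + (\<Sum>i\<in>I. q i * (c i - c i / (b - a) * (b - a)))"
    by (rule has_integral_le[OF integrable_integral[OF Lint] Rint pw])
  hence "CRPS a b L y \<le> - ((b - a) / 2) * ln Z"
    unfolding CRPS_def h_def Rval .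
  thus ?thesis unfolding L_def Z_def c_def .
qed


theorem theorem3:
  fixes a b :: real and N T :: nat
    and F :: "nat \<Rightarrow> nat \<Rightarrow> real \<Rightarrow> real" and y :: "nat \<Rightarrow> real"
  assumes "a < b" and "N \<ge> 1" and "T \<ge> 1"
    and "\<forall>i\<in>{1..N}. \<forall>t\<in>{1..T}. pdf_on a b (F i t)"
    and "\<forall>t\<in>{1..T}. y t \<in> {a..b}"
  shows "\<forall>i\<in>{1..N}.
    (\<Sum>t=1..T. CRPS a b (learner a b N F y t) (y t))
      \<le> (\<Sum>t=1..T. CRPS a b (F i t) (y t)) + (b - a) / 2 * ln (real N)"
proof
  fix k assume k: "k \<in> {1..N}"
  note ab = assms(1)
  define W where "W = (\<lambda>i t. weight a b N F y i t)"
  define Sw where "Sw = (\<lambda>t. \<Sum>j=1..N. W j t)"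
  define c where "c = (\<lambda>i t. CRPS a b (F i t) (y t))"
  have Npos: "real N > 0" using assms(2) by simp
  have wrec: "W i (Suc t) = W i t * exp (- (2 / (b - a)) * c i t)" if t1: "t \<ge> 1" for i t
  proof -
    obtain t' where "t = Suc t'" using t1 by (cases t) auto
    thus ?thesis by (simp add: W_def c_def)
  qed
  have wclosed: "W i (Suc t) = 1 / real N * exp (- (2 / (b - a)) * (\<Sum>s=1..t. c i s))" for i t
  proof (induction t)
    case 0
    then show ?case by (simp add: W_def)
  next
    case (Suc t)
    have "W i (Suc (Suc t)) = W i (Suc t) * exp (- (2 / (b - a)) * c i (Suc t))"
      by (rule wrec) simp
    also have "\<dots> = 1 / real N * exp (- (2 / (b - a)) * (\<Sum>s=1..t. c i s) + - (2 / (b - a)) * c i (Suc t))"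
      unfolding Suc exp_add by simp
    also have "- (2 / (b - a)) * (\<Sum>s=1..t. c i s) + - (2 / (b - a)) * c i (Suc t) = - (2 / (b - a)) * (\<Sum>s=1..Suc t. c i s)"
      by (simp add: algebra_simps)
    finally show ?case .
  qed
  have wpos: "W i t > 0" for i t
  proof (cases t)
    case 0 thus ?thesis using Npos by (simp add: W_def)
  next
    case (Suc t') thus ?thesis using wclosed[of i t'] Npos by simp
  qed
  have Swpos: "Sw t > 0" for t
    unfolding Sw_def using assms(2) by (intro sum_pos2[of _ 1]) (auto intro: less_imp_le wpos)
  have Sw1: "Sw 1 = 1" using Npos by (simp add: Sw_def W_def)
  have stepT: "CRPS a b (learner a b N F y t) (y t) \<le> (b - a) / 2 * (ln (Sw t) - ln (Sw (Suc t)))"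
    if t: "t \<in> {1..T}" for t
  proof -
    define p where "p = (\<lambda>i. W i t / Sw t)"
    have pn: "nweight a b N F y i t = p i" for i by (simp add: nweight_def p_def Sw_def W_def)
    have lrn: "learner a b N F y t = (\<lambda>u. 1/2 - 1/4 * ln ((\<Sum>i\<in>{1..N}. p i * exp (-2 * (F i t u)\<^sup>2)) / (\<Sum>i\<in>{1..N}. p i * exp (-2 * (1 - F i t u)\<^sup>2))))"
      by (rule ext) (simp add: learner_def pn)
    have p0: "p i \<ge> 0" for i using wpos[of i t] Swpos[of t] by (simp add: p_def)
    have p1: "sum p {1..N} = 1" using Swpos[of t] by (simp add: p_def Sw_def sum_divide_distrib[symmetric])
    have "CRPS a b (learner a b N F y t) (y t) \<le> - ((b - a) / 2) * ln (\<Sum>i\<in>{1..N}. p i * exp (- (2 / (b - a)) * CRPS a b (F i t) (y t)))"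
      unfolding lrn by (rule step[OF ab _ p0 p1]) (use assms(4,5) t in auto)
    also have "(\<Sum>i\<in>{1..N}. p i * exp (- (2 / (b - a)) * CRPS a b (F i t) (y t))) = Sw (Suc t) / Sw t"
      unfolding Sw_def p_def sum_divide_distrib
      using t by (intro sum.cong refl) (simp add: wrec c_def)
    also have "ln (Sw (Suc t) / Sw t) = ln (Sw (Suc t)) - ln (Sw t)"
      using Swpos[of t] Swpos[of "Suc t"] by (simp add: ln_div)
    finally show ?thesis by (simp add: algebra_simps)
  qed
  have "(\<Sum>t=1..T. CRPS a b (learner a b N F y t) (y t)) \<le> (\<Sum>t=1..T. (b - a) / 2 * (ln (Sw t) - ln (Sw (Suc t))))"
    by (rule sum_mono) (rule stepT)
  also have "\<dots> = (b - a) / 2 * (\<Sum>t=1..T. (- ln (Sw (Suc t))) - (- ln (Sw t)))"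
    by (simp add: sum_distrib_left)
  also have "(\<Sum>t=1..T. (- ln (Sw (Suc t))) - (- ln (Sw t))) = - ln (Sw (Suc T)) - (- ln (Sw 1))"
    by (rule sum_Suc_diff) (use assms(3) in simp)
  also have "\<dots> = - ln (Sw (Suc T))" using Sw1 by simp
  also have "- ln (Sw (Suc T)) \<le> - ln (W k (Suc T))"
  proof -
    have "W k (Suc T) \<le> Sw (Suc T)"
      unfolding Sw_def by (rule member_le_sum) (use k wpos less_imp_le in auto)
    thus ?thesis using wpos[of k "Suc T"] by simp
  qed
  also have "- ln (W k (Suc T)) = ln (real N) + (2 / (b - a)) * (\<Sum>s=1..T. c k s)"
    unfolding wclosed using Npos by (simp add: ln_mult ln_div)
  finally have "(\<Sum>t=1..T. CRPS a b (learner a b N F y t) (y t)) \<le> (b - a) / 2 * (ln (real N) + (2 / (b - a)) * (\<Sum>s=1..T. c k s))"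
    using ab by (simp add: mult_left_mono)
  also have "\<dots> = (\<Sum>s=1..T. c k s) + (b - a) / 2 * ln (real N)"
    using ab by (simp add: field_simps)
  finally show "(\<Sum>t=1..T. CRPS a b (learner a b N F y t) (y t))
      \<le> (\<Sum>t=1..T. CRPS a b (F k t) (y t)) + (b - a) / 2 * ln (real N)"
    by (simp add: c_def)
qed

end
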